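(* Let $\Omega=\{y\in\mathbb{R}^n: a_i^Ty\le b_i,\ i=1,\ldots,m\}$, let $x\in\Omega$ and $\alpha>0$, and suppose the nearly-active index set $I(x,\alpha)$ has $q\le n$ elements and $\{a_i:i\in I(x,\alpha)\}$ are linearly independent; label them so that $I(x,\alpha)=\{1,\ldots,q\}$ and let $A=[a_1\ \cdots\ a_q]\in\mathbb{R}^{n\times q}$. Let $u_1,\ldots,u_n$ be an orthonormal set of left singular vectors of $A$ with $u_1,\ldots,u_q$ spanning $\operatorname{col}(A)$. For $i=1,\ldots,q$ let $\hat d_i:=-(A^\dagger)^Te_i$, $d_i:=\frac{\alpha}{\|\hat d_i\|}\hat d_i$, and let $\alpha_i$ be the largest value in $[0,1]$ such that $x-\alpha_id_i\in\Omega$. Define $$\mathcal{D}=\{d_1,\ldots,d_q\}\cup\{-\alpha_1d_1,\ldots,-\alpha_qd_q\}\cup\{\pm\alpha u_{q+1},\ldots,\pm\alpha u_n\}.$$ Then $\mathcal{D}$ is a $\Lambda$-positive spanning set for $B(x,\alpha)\cap\Omega$ with $\Lambda=q\,\kappa(A)+\sqrt{n-q}$.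
   Context: Nearly-active constraints: $I(x,\alpha):=\{i\in\{1,\ldots,m\}: b_i-\alpha\|a_i\|\le a_i^Tx\}$ (constraints whose boundary hyperplane is within distance $\alpha$ of $x$). $A^\dagger=(A^TA)^{-1}A^T$ is the Moore–Penrose pseudoinverse, $\kappa(A)=\|A\|\,\|A^\dagger\|$ is the condition number (operator 2-norms), $e_i\in\mathbb{R}^q$ the coordinate vectors, $B(y,r)=\{z:\|z-y\|\le r\}$. Given $x\in\Omega$, $\alpha>0$, $\Lambda\ge0$, a set $\{d_1,\ldots,d_p\}$ is a $\Lambda$-positive spanning set for $B(x,\alpha)\cap\Omega$ if $x+d_i\in\Omega$ for all $i$ and, for every $v\in\mathbb{R}^n$ with $x+v\in\Omega$ and $\|v\|\le\alpha$, there exists $c\in\mathbb{R}^p$ with $c\ge0$, $v=\sum_ic_id_i$ and $\|c\|_1\le\Lambda$. *)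

theory Defs
  imports "HOL-Analysis.Analysis"
begin

definition polyhedron :: "(nat \<Rightarrow> real^'n) \<Rightarrow> (nat \<Rightarrow> real) \<Rightarrow> nat \<Rightarrow> (real^'n) set" where
  "polyhedron a b m = {y. \<forall>i\<in>{1..m}. a i \<bullet> y \<le> b i}"

definition nearly_active :: "(nat \<Rightarrow> real^'n) \<Rightarrow> (nat \<Rightarrow> real) \<Rightarrow> nat \<Rightarrow> real^'n \<Rightarrow> real \<Rightarrow> nat set" where
  "nearly_active a b m x \<alpha> = {i\<in>{1..m}. b i - \<alpha> * norm (a i) \<le> a i \<bullet> x}"

definition pos_spanning :: "real \<Rightarrow> (real^'n) set \<Rightarrow> (real^'n) set \<Rightarrow> real^'n \<Rightarrow> real \<Rightarrow> bool" where
  "pos_spanning \<Lambda> D \<Omega> x \<alpha> \<longleftrightarrow>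
     finite D \<and> (\<forall>d\<in>D. x + d \<in> \<Omega>) \<and>
     (\<forall>v. x + v \<in> \<Omega> \<and> norm v \<le> \<alpha> \<longrightarrow>
        (\<exists>c. (\<forall>d\<in>D. c d \<ge> 0) \<and> v = (\<Sum>d\<in>D. c d *\<^sub>R d) \<and> (\<Sum>d\<in>D. \<bar>c d\<bar>) \<le> \<Lambda>))"

text \<open>Moore--Penrose pseudoinverse of a matrix with linearly independent columns.\<close>
definition pinv :: "real^'q^'n \<Rightarrow> real^'n^'q" where
  "pinv A = matrix_inv (transpose A ** A) ** transpose A"

definition kappa :: "real^'q^'n \<Rightarrow> real" where
  "kappa A = onorm (\<lambda>v. A *v v) * onorm (\<lambda>v. pinv A *v v)"

definition left_singular_vector :: "real^'q^'n \<Rightarrow> real^'n \<Rightarrow> bool" where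
  "left_singular_vector A w \<longleftrightarrow> norm w = 1 \<and> (\<exists>\<sigma>\<ge>0. (A ** transpose A) *v w = (\<sigma>\<^sup>2) *\<^sub>R w)"

definition orthonormal_family :: "(nat \<Rightarrow> real^'n) \<Rightarrow> nat \<Rightarrow> bool" where
  "orthonormal_family u n \<longleftrightarrow> (\<forall>k\<in>{1..n}. \<forall>l\<in>{1..n}. u k \<bullet> u l = (if k = l then 1 else 0))"

definition col_matrix :: "(nat \<Rightarrow> real^'n) \<Rightarrow> ('q \<Rightarrow> nat) \<Rightarrow> real^'q^'n" where
  "col_matrix a idx = (\<chi> i j. a (idx j) $ i)"

definition dhat :: "real^'q^'n \<Rightarrow> 'q \<Rightarrow> real^'n" where
  "dhat A j = - (transpose (pinv A) *v axis j 1)"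

definition dvec :: "real \<Rightarrow> real^'q^'n \<Rightarrow> 'q \<Rightarrow> real^'n" where
  "dvec \<alpha> A j = (\<alpha> / norm (dhat A j)) *\<^sub>R dhat A j"

definition step_j :: "(real^'n) set \<Rightarrow> real^'n \<Rightarrow> real \<Rightarrow> real^'q^'n \<Rightarrow> 'q \<Rightarrow> real" where
  "step_j \<Omega> x \<alpha> A j = (GREATEST t. t \<in> {0..1} \<and> x - t *\<^sub>R dvec \<alpha> A j \<in> \<Omega>)"

definition Dset :: "(real^'n) set \<Rightarrow> real^'n \<Rightarrow> real \<Rightarrow> real^'q^'n \<Rightarrow> (nat \<Rightarrow> real^'n) \<Rightarrow> (real^'n) set" where
  "Dset \<Omega> x \<alpha> A u =
     range (dvec \<alpha> A)
     \<union> (\<lambda>j. - (step_j \<Omega> x \<alpha> A j *\<^sub>R dvec \<alpha> A j)) ` UNIV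
     \<union> (\<lambda>k. \<alpha> *\<^sub>R u k) ` {CARD('q)+1..CARD('n)}
     \<union> (\<lambda>k. - (\<alpha> *\<^sub>R u k)) ` {CARD('q)+1..CARD('n)}"

end

theory Submission
  imports Defs
begin

lemma mv_expand: "(M::real^'q^'n) *v y = (\<Sum>j\<in>UNIV. (y$j) *\<^sub>R (M *v axis j 1))"
  by (simp add: vec_eq_iff matrix_vector_mult_def axis_def sum_component if_distrib cong: if_cong)
     (simp add: mult.commute sum_distrib_left)

lemma trans_comp: "(transpose (M::real^'q^'n) *v y) $ l = column l M \<bullet> y"
  by (simp add: matrix_vector_mul_component transpose_def column_def)

lemma col_matrix_column: "column l (col_matrix a idx) = a (idx l)"
  by (simp add: column_def col_matrix_def vec_eq_iff)

lemma col_matrix_axis: "col_matrix a idx *v axis l 1 = a (idx l)"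
  by (simp add: matrix_vector_mult_basis col_matrix_column)

lemma pinv_facts:
  fixes A :: "real^'q^'n"
  assumes inj: "\<And>c. A *v c = 0 \<Longrightarrow> c = 0"
  shows "pinv A ** A = mat 1" "transpose (pinv A) ** (transpose A ** A) = A"
proof -
  define G where "G = transpose A ** A"
  have "G *v c = 0 \<Longrightarrow> c = 0" for c
  proof -
    assume h: "G *v c = 0"
    have "(A *v c) \<bullet> (A *v c) = ((A *v c) v* A) \<bullet> c"
      using dot_lmul_matrix[of "A *v c" A c] by (simp add: inner_commute)
    also have "\<dots> = (G *v c) \<bullet> c" by (simp add: G_def matrix_vector_mul_assoc[symmetric])
    finally have "A *v c = 0" using h by simp
    thus "c = 0" using inj by blast
  qed
  then have "\<exists>B. B ** G = mat 1" using matrix_left_invertible_ker by blast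
  then have "invertible G" using invertible_left_inverse by blast
  then have gi: "G ** matrix_inv G = mat 1 \<and> matrix_inv G ** G = mat 1"
    unfolding invertible_def matrix_inv_def by (rule someI_ex)
  show "pinv A ** A = mat 1"
    using gi by (simp add: pinv_def G_def matrix_mul_assoc)
  have tG: "transpose G = G" by (simp add: G_def matrix_transpose_mul)
  have "transpose (pinv A) ** G = transpose (pinv A) ** transpose G" using tG by simp
  also have "\<dots> = transpose (G ** pinv A)" by (simp add: matrix_transpose_mul)
  also have "G ** pinv A = transpose A" using gi
    by (simp add: pinv_def G_def[symmetric] matrix_mul_assoc)
  finally show "transpose (pinv A) ** (transpose A ** A) = A" by (simp add: G_def)
qed

lemma mv_neg: "(M::real^'q^'n) *v (- y) = - (M *v y)"
  by (simp add: vec_eq_iff matrix_vector_mult_def sum_negf)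

lemma dhat_prop:
  fixes A :: "real^'q^'n"
  assumes "pinv A ** A = mat 1"
  shows "transpose A *v dhat A j = - axis j 1"
proof -
  have "transpose A *v dhat A j = - ((transpose A ** transpose (pinv A)) *v axis j 1)"
    by (simp add: dhat_def matrix_vector_mul_assoc mv_neg del: transpose_matrix_vector)
  also have "transpose A ** transpose (pinv A) = mat 1"
    using assms by (metis matrix_transpose_mul transpose_mat)
  finally show ?thesis by simp
qed

lemma expand_col:
  fixes A :: "real^'q^'n"
  assumes "transpose (pinv A) ** (transpose A ** A) = A"
  shows "A *v c = - (\<Sum>j\<in>UNIV. ((transpose A *v (A *v c)) $ j) *\<^sub>R dhat A j)"
proof -
  have "(\<Sum>j\<in>UNIV. ((transpose A *v (A *v c)) $ j) *\<^sub>R dhat A j)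
       = - (\<Sum>j\<in>UNIV. ((transpose A *v (A *v c)) $ j) *\<^sub>R (transpose (pinv A) *v axis j 1))"
    by (simp add: dhat_def sum_negf)
  also have "(\<Sum>j\<in>UNIV. ((transpose A *v (A *v c)) $ j) *\<^sub>R (transpose (pinv A) *v axis j 1))
      = transpose (pinv A) *v (transpose A *v (A *v c))" by (rule mv_expand[symmetric])
  also have "\<dots> = A *v c" using assms by (simp add: matrix_vector_mul_assoc)
  finally show ?thesis by simp
qed

definition rep :: "(real^'n) set \<Rightarrow> real^'n \<Rightarrow> real \<Rightarrow> bool" where
  "rep D v L \<longleftrightarrow> (\<exists>c. (\<forall>d\<in>D. c d \<ge> 0) \<and> v = (\<Sum>d\<in>D. c d *\<^sub>R d) \<and> (\<Sum>d\<in>D. \<bar>c d\<bar>) \<le> L)"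

lemma rep_zero: "rep D 0 0"
  unfolding rep_def by (rule exI[of _ "\<lambda>_. 0"]) simp

lemma rep_mono: "rep D v L \<Longrightarrow> L \<le> L' \<Longrightarrow> rep D v L'"
  unfolding rep_def by force

lemma rep_add: assumes "rep D v1 L1" "rep D v2 L2" shows "rep D (v1 + v2) (L1 + L2)"
proof -
  obtain c1 where c1: "\<forall>d\<in>D. c1 d \<ge> 0" "v1 = (\<Sum>d\<in>D. c1 d *\<^sub>R d)" "(\<Sum>d\<in>D. \<bar>c1 d\<bar>) \<le> L1"
    using assms(1) unfolding rep_def by blast
  obtain c2 where c2: "\<forall>d\<in>D. c2 d \<ge> 0" "v2 = (\<Sum>d\<in>D. c2 d *\<^sub>R d)" "(\<Sum>d\<in>D. \<bar>c2 d\<bar>) \<le> L2"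
    using assms(2) unfolding rep_def by blast
  have "(\<Sum>d\<in>D. \<bar>c1 d + c2 d\<bar>) = (\<Sum>d\<in>D. \<bar>c1 d\<bar>) + (\<Sum>d\<in>D. \<bar>c2 d\<bar>)"
    using c1(1) c2(1) by (simp add: sum.distrib[symmetric])
  then show ?thesis unfolding rep_def using c1 c2
    by (intro exI[of _ "\<lambda>d. c1 d + c2 d"]) (simp add: scaleR_add_left sum.distrib)
qed

lemma rep_single: assumes "finite D" "d \<in> D" "l \<ge> 0" shows "rep D (l *\<^sub>R d) l"
proof -
  have "(\<Sum>e\<in>D. (if e = d then l else 0) *\<^sub>R e) = (\<Sum>e\<in>D. if e = d then l *\<^sub>R e else 0)"
    by (rule sum.cong) auto
  also have "\<dots> = l *\<^sub>R d" using assms by (simp add: sum.delta')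
  finally have 1: "(\<Sum>e\<in>D. (if e = d then l else 0) *\<^sub>R e) = l *\<^sub>R d" .
  have "(\<Sum>e\<in>D. \<bar>if e = d then l else 0\<bar>) = (\<Sum>e\<in>D. if e = d then l else 0)"
    using assms by (intro sum.cong) auto
  also have "\<dots> = l" using assms by (simp add: sum.delta')
  finally have 2: "(\<Sum>e\<in>D. \<bar>if e = d then l else 0\<bar>) = l" .
  show ?thesis unfolding rep_def using assms 1 2
    by (intro exI[of _ "\<lambda>e. if e = d then l else 0"]) simp
qed

lemma rep_sum: assumes "finite K" "\<And>k. k \<in> K \<Longrightarrow> rep D (f k) (L k)"
  shows "rep D (\<Sum>k\<in>K. f k) (\<Sum>k\<in>K. L k)"
  using assms
proof (induction K rule: finite_induct)
  case empty then show ?case by (simp add: rep_zero)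
next
  case (insert k K) then show ?case by (simp add: rep_add)
qed

lemma in_poly:
  assumes "x \<in> polyhedron a b m" "\<forall>i\<in>nearly_active a b m x \<alpha>. a i \<bullet> z \<le> b i - a i \<bullet> x" "norm z \<le> \<alpha>"
  shows "x + z \<in> polyhedron a b m"
  unfolding polyhedron_def
proof (safe)
  fix i assume i: "i \<in> {1..m}"
  show "a i \<bullet> (x + z) \<le> b i"
  proof (cases "i \<in> nearly_active a b m x \<alpha>")
    case True then show ?thesis using assms(2) by (auto simp: inner_add_right)
  next
    case False
    then have "b i - \<alpha> * norm (a i) > a i \<bullet> x" using i unfolding nearly_active_def by auto
    moreover have "a i \<bullet> z \<le> norm (a i) * norm z" by (rule norm_cauchy_schwarz)
    moreover have "norm (a i) * norm z \<le> norm (a i) * \<alpha>" using assms(3) by (simp add: mult_left_mono)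
    ultimately show ?thesis by (simp add: inner_add_right algebra_simps)
  qed
qed

lemma onb:
  fixes u :: "nat \<Rightarrow> real^'n"
  assumes "orthonormal_family u CARD('n)"
  shows "v = (\<Sum>k\<in>{1..CARD('n)}. (v \<bullet> u k) *\<^sub>R u k)"
proof -
  let ?n = "CARD('n)"
  have o: "\<And>k l. k \<in> {1..?n} \<Longrightarrow> l \<in> {1..?n} \<Longrightarrow> u k \<bullet> u l = (if k = l then 1 else 0)"
    using assms unfolding orthonormal_family_def by blast
  have inj: "inj_on u {1..?n}"
    by (rule inj_onI) (metis o one_neq_zero)
  have po: "pairwise orthogonal (u ` {1..?n})"
    unfolding pairwise_def orthogonal_def
  proof (clarify)
    fix k l assume "k \<in> {1..?n}" "l \<in> {1..?n}" "u k \<noteq> u l"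
    then show "u k \<bullet> u l = 0" using o[of k l] by (auto split: if_splits)
  qed
  have z: "0 \<notin> u ` {1..?n}"
  proof
    assume "0 \<in> u ` {1..?n}"
    then obtain k where "k \<in> {1..?n}" "u k = 0" by auto
    then show False using o[of k k] by simp
  qed
  have "independent (u ` {1..?n})"
    by (rule pairwise_orthogonal_independent[OF po z])
  moreover have "card (u ` {1..?n}) = ?n" using inj by (simp add: card_image)
  ultimately have sp: "UNIV \<subseteq> span (u ` {1..?n})"
    by (intro card_ge_dim_independent) auto
  define r where "r = v - (\<Sum>k\<in>{1..?n}. (v \<bullet> u k) *\<^sub>R u k)"
  have "r \<bullet> u l = 0" if l: "l \<in> {1..?n}" for l
  proof -
    have "(\<Sum>k\<in>{1..?n}. (v \<bullet> u k) *\<^sub>R u k) \<bullet> u l = (\<Sum>k\<in>{1..?n}. (v \<bullet> u k) * (u k \<bullet> u l))"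
      by (simp add: inner_sum_left)
    also have "\<dots> = (\<Sum>k\<in>{1..?n}. if k = l then v \<bullet> u l else 0)"
    proof (rule sum.cong)
      fix k assume "k \<in> {1..?n}"
      then show "(v \<bullet> u k) * (u k \<bullet> u l) = (if k = l then v \<bullet> u l else 0)"
        using o[of k l] l by auto
    qed simp
    also have "\<dots> = v \<bullet> u l" using l by simp
    finally show ?thesis by (simp add: r_def inner_diff_left)
  qed
  then have "orthogonal r r"
    by (intro orthogonal_to_span[of r "u ` {1..?n}" r]) (use sp in \<open>auto simp: orthogonal_def\<close>)
  then have "r = 0" by (simp add: orthogonal_def)
  then show ?thesis by (simp add: r_def)
qed

lemma onb_norm:
  fixes u :: "nat \<Rightarrow> real^'n"
  assumes "orthonormal_family u CARD('n)"
  shows "(\<Sum>k\<in>{1..CARD('n)}. (v \<bullet> u k)^2) = (norm v)^2"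
proof -
  have "(norm v)^2 = v \<bullet> v" by (simp add: power2_norm_eq_inner)
  also have "\<dots> = v \<bullet> (\<Sum>k\<in>{1..CARD('n)}. (v \<bullet> u k) *\<^sub>R u k)"
    using onb[OF assms, of v] by simp
  also have "\<dots> = (\<Sum>k\<in>{1..CARD('n)}. (v \<bullet> u k)^2)"
    by (simp add: inner_sum_right power2_eq_square)
  finally show ?thesis by simp
qed

lemma abs_sum_bound:
  fixes u :: "nat \<Rightarrow> real^'n"
  assumes "orthonormal_family u CARD('n)" "K \<subseteq> {1..CARD('n)}"
  shows "(\<Sum>k\<in>K. \<bar>v \<bullet> u k\<bar>) \<le> sqrt (real (card K)) * norm v"
proof -
  have h1: "(\<Sum>k\<in>K. \<bar>v \<bullet> u k\<bar>)^2 \<le> (\<Sum>k\<in>K. \<bar>v \<bullet> u k\<bar>^2) * card K"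
    by (rule sum_squared_le_sum_of_squares)
  have "(\<Sum>k\<in>K. \<bar>v \<bullet> u k\<bar>^2) \<le> (\<Sum>k\<in>{1..CARD('n)}. (v \<bullet> u k)^2)"
    unfolding power2_abs by (rule sum_mono2) (use assms(2) in auto)
  also have "\<dots> = (norm v)^2" by (rule onb_norm[OF assms(1)])
  finally have h2: "(\<Sum>k\<in>K. \<bar>v \<bullet> u k\<bar>^2) \<le> (norm v)^2" .
  have "(\<Sum>k\<in>K. \<bar>v \<bullet> u k\<bar>)^2 \<le> (norm v)^2 * card K"
    using h1 mult_right_mono[OF h2, of "real (card K)"] by simp
  then have "(\<Sum>k\<in>K. \<bar>v \<bullet> u k\<bar>)^2 \<le> (sqrt (real (card K)) * norm v)^2"
    by (simp add: power_mult_distrib mult.commute)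
  then show ?thesis
    by (rule power2_le_imp_le) simp
qed

lemma rep_u:
  fixes u :: "nat \<Rightarrow> real^'n"
  assumes "finite D" "\<alpha> > 0" "finite K" "\<And>k. k \<in> K \<Longrightarrow> \<alpha> *\<^sub>R u k \<in> D \<and> - (\<alpha> *\<^sub>R u k) \<in> D"
  shows "rep D (\<Sum>k\<in>K. (v \<bullet> u k) *\<^sub>R u k) (\<Sum>k\<in>K. \<bar>v \<bullet> u k\<bar> / \<alpha>)"
proof (rule rep_sum[OF assms(3)])
  fix k assume k: "k \<in> K"
  show "rep D ((v \<bullet> u k) *\<^sub>R u k) (\<bar>v \<bullet> u k\<bar> / \<alpha>)"
  proof (cases "v \<bullet> u k \<ge> 0")
    case True
    have e: "(v \<bullet> u k) *\<^sub>R u k = (\<bar>v \<bullet> u k\<bar> / \<alpha>) *\<^sub>R (\<alpha> *\<^sub>R u k)" using True assms(2) by simp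
    show ?thesis unfolding e by (rule rep_single[OF assms(1)]) (use assms(2,4) k in auto)
  next
    case False
    have e: "(v \<bullet> u k) *\<^sub>R u k = (\<bar>v \<bullet> u k\<bar> / \<alpha>) *\<^sub>R (- (\<alpha> *\<^sub>R u k))" using False assms(2) by simp
    show ?thesis unfolding e by (rule rep_single[OF assms(1)]) (use assms(2,4) k in auto)
  qed
qed

lemma pos_spanning_rep: "pos_spanning L D \<Omega> x \<alpha> \<longleftrightarrow> finite D \<and> (\<forall>d\<in>D. x + d \<in> \<Omega>) \<and>
   (\<forall>v. x + v \<in> \<Omega> \<and> norm v \<le> \<alpha> \<longrightarrow> rep D v L)"
  unfolding pos_spanning_def rep_def by blast

theorem theorem5p8:
  fixes a :: "nat \<Rightarrow> real^'n" and b :: "nat \<Rightarrow> real" and m :: nat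
    and x :: "real^'n" and \<alpha> :: real
    and idx :: "'q::finite \<Rightarrow> nat" and u :: "nat \<Rightarrow> real^'n"
  defines "\<Omega> \<equiv> polyhedron a b m"
    and "I \<equiv> nearly_active a b m x \<alpha>"
  assumes x_in: "x \<in> \<Omega>"
    and alpha_pos: "\<alpha> > 0"
    and q_le_n: "card I \<le> CARD('n)"
    and lin_indep: "inj_on a I \<and> independent (a ` I)"
    and u_orth: "orthonormal_family u CARD('n)"
  shows
    "(bij_betw idx UNIV I \<and>
      (\<forall>k\<in>{1..CARD('n)}. left_singular_vector (col_matrix a idx) (u k)) \<and>
      span (u ` {1..CARD('q)}) = range (\<lambda>c. col_matrix a idx *v c)
      \<longrightarrow> pos_spanning (real CARD('q) * kappa (col_matrix a idx) + sqrt (real CARD('n) - real CARD('q)))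
            (Dset \<Omega> x \<alpha> (col_matrix a idx) u) \<Omega> x \<alpha>)
     \<and>
     (I = {} \<longrightarrow>
       pos_spanning (sqrt (real CARD('n)))
         ((\<lambda>k. \<alpha> *\<^sub>R u k) ` {1..CARD('n)} \<union> (\<lambda>k. - (\<alpha> *\<^sub>R u k)) ` {1..CARD('n)}) \<Omega> x \<alpha>)"
proof -
  let ?n = "CARD('n)"
  have Isub: "I \<subseteq> {1..m}" by (auto simp: I_def nearly_active_def)
  have finI: "finite I" using Isub finite_subset by blast
  have xin: "\<And>i. i \<in> {1..m} \<Longrightarrow> a i \<bullet> x \<le> b i" using x_in by (simp add: \<Omega>_def polyhedron_def)
  have uo: "\<And>k l. k \<in> {1..?n} \<Longrightarrow> l \<in> {1..?n} \<Longrightarrow> u k \<bullet> u l = (if k = l then 1 else 0)"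
    using u_orth unfolding orthonormal_family_def by blast
  have norm_u: "\<And>k. k \<in> {1..?n} \<Longrightarrow> norm (u k) = 1" using uo by (simp add: norm_eq_1)
  have in_poly': "\<And>z. norm z \<le> \<alpha> \<Longrightarrow> (\<And>i. i \<in> I \<Longrightarrow> a i \<bullet> z \<le> b i - a i \<bullet> x) \<Longrightarrow> x + z \<in> \<Omega>"
    unfolding \<Omega>_def using x_in unfolding \<Omega>_def I_def by (intro in_poly) auto
  show ?thesis
  proof (intro conjI impI)
    assume "I = {}"
    let ?D = "(\<lambda>k. \<alpha> *\<^sub>R u k) ` {1..?n} \<union> (\<lambda>k. - (\<alpha> *\<^sub>R u k)) ` {1..?n}"
    show "pos_spanning (sqrt (real ?n)) ?D \<Omega> x \<alpha>"
      unfolding pos_spanning_rep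
    proof (intro conjI allI impI ballI)
      show "finite ?D" by simp
      fix d assume "d \<in> ?D"
      then obtain k where k: "k \<in> {1..?n}" "d = \<alpha> *\<^sub>R u k \<or> d = - (\<alpha> *\<^sub>R u k)" by auto
      then have "norm d \<le> \<alpha>" using norm_u alpha_pos by auto
      then show "x + d \<in> \<Omega>" using \<open>I = {}\<close> by (intro in_poly') auto
    next
      fix v assume v: "x + v \<in> \<Omega> \<and> norm v \<le> \<alpha>"
      have r: "rep ?D (\<Sum>k\<in>{1..?n}. (v \<bullet> u k) *\<^sub>R u k) (\<Sum>k\<in>{1..?n}. \<bar>v \<bullet> u k\<bar> / \<alpha>)"
        by (rule rep_u) (auto simp: alpha_pos)
      have "(\<Sum>k\<in>{1..?n}. \<bar>v \<bullet> u k\<bar>) \<le> sqrt (real (card {1..?n})) * norm v"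
        by (rule abs_sum_bound[OF u_orth]) simp
      also have "\<dots> \<le> sqrt (real ?n) * \<alpha>" using v by (simp add: mult_left_mono)
      finally have "(\<Sum>k\<in>{1..?n}. \<bar>v \<bullet> u k\<bar> / \<alpha>) \<le> sqrt (real ?n)"
        using alpha_pos by (simp add: sum_divide_distrib[symmetric] pos_divide_le_eq)
      then show "rep ?D v (sqrt (real ?n))"
        using rep_mono[OF r] onb[OF u_orth, of v] by simp
    qed
  next
    assume H: "bij_betw idx UNIV I \<and>
      (\<forall>k\<in>{1..CARD('n)}. left_singular_vector (col_matrix a idx) (u k)) \<and>
      span (u ` {1..CARD('q)}) = range (\<lambda>c. col_matrix a idx *v c)"
    then have bij: "bij_betw idx UNIV I" and spn: "span (u ` {1..CARD('q)}) = range (\<lambda>c. col_matrix a idx *v c)"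
      by auto
    define A where "A = col_matrix a idx"
    have spnA: "span (u ` {1..CARD('q)}) = range (\<lambda>c. A *v c)" using spn by (simp add: A_def)
    have cardI: "card I = CARD('q)" using bij_betw_same_card[OF bij] by simp
    have qn: "CARD('q) \<le> ?n" using q_le_n cardI by simp
    have idxI: "\<And>j. idx j \<in> I" using bij by (auto simp: bij_betw_def)
    have idxm: "\<And>j. idx j \<in> {1..m}" using Isub idxI by blast
    have Iidx: "\<And>i. i \<in> I \<Longrightarrow> \<exists>l. i = idx l" using bij by (auto simp: bij_betw_def)
    have Aaxis: "\<And>j. A *v axis j 1 = a (idx j)" by (simp add: A_def col_matrix_axis)
    have tcomp: "\<And>y l. (transpose A *v y) $ l = a (idx l) \<bullet> y"
      by (simp add: A_def trans_comp col_matrix_column del: transpose_matrix_vector)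
    have injA: "c = 0" if h: "A *v c = 0" for c
    proof (rule ccontr)
      assume "c \<noteq> 0"
      then obtain j0 where j0: "c $ j0 \<noteq> 0" by (auto simp: vec_eq_iff)
      define f where "f = a \<circ> idx"
      have "inj idx" using bij by (simp add: bij_betw_def)
      moreover have "inj_on a (idx ` UNIV)" using lin_indep bij by (simp add: bij_betw_def)
      ultimately have injf: "inj f" unfolding f_def by (rule comp_inj_on)
      have "f ` UNIV = a ` (idx ` UNIV)" by (simp add: f_def image_comp)
      then have fim: "f ` UNIV = a ` I" using bij by (simp add: bij_betw_def)
      define w where "w = (\<lambda>z. c $ (inv f z))"
      have "(\<Sum>z\<in>a ` I. w z *\<^sub>R z) = (\<Sum>z\<in>f ` UNIV. w z *\<^sub>R z)" using fim by simp
      also have "\<dots> = (\<Sum>j\<in>UNIV. w (f j) *\<^sub>R f j)" using sum.reindex[OF injf] by simp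
      also have "\<dots> = (\<Sum>j\<in>UNIV. c $ j *\<^sub>R f j)"
        using inv_f_f[OF injf] by (simp add: w_def)
      also have "\<dots> = (\<Sum>j\<in>UNIV. c $ j *\<^sub>R (A *v axis j 1))"
        by (simp add: f_def Aaxis)
      also have "\<dots> = A *v c" by (rule mv_expand[symmetric])
      finally have "(\<Sum>z\<in>a ` I. w z *\<^sub>R z) = 0" using h by simp
      moreover have "w (f j0) \<noteq> 0" using inv_f_f[OF injf] j0 by (simp add: w_def)
      moreover have "f j0 \<in> a ` I" using fim by auto
      ultimately have "\<exists>u. (\<exists>v\<in>a ` I. u v \<noteq> 0) \<and> (\<Sum>v\<in>a ` I. u v *\<^sub>R v) = 0"
        by blast
      then have "dependent (a ` I)"
        using real_vector.dependent_finite[of "a ` I"] finI by simp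
      with lin_indep show False by simp
    qed
    have pf1: "pinv A ** A = mat 1" and pf2: "transpose (pinv A) ** (transpose A ** A) = A"
      using pinv_facts[of A] injA by auto
    have dh: "a (idx l) \<bullet> dhat A j = - (if l = j then 1 else 0)" for l j
    proof -
      have "(transpose A *v dhat A j) $ l = (- axis j 1) $ l" by (simp only: dhat_prop[OF pf1])
      then show ?thesis unfolding tcomp by (simp add: axis_def)
    qed
    define N where "N j = norm (dhat A j)" for j
    have Npos: "N j > 0" for j
    proof -
      have "dhat A j \<noteq> 0" using dh[of j j] by auto
      then show ?thesis by (simp add: N_def)
    qed
    define d where "d = dvec \<alpha> A"
    have d_eq: "d j = (\<alpha> / N j) *\<^sub>R dhat A j" for j by (simp add: d_def dvec_def N_def)
    have nd: "norm (d j) = \<alpha>" for j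
      using Npos[of j] alpha_pos by (simp add: d_eq N_def[symmetric])
    have ad: "a (idx l) \<bullet> d j = - (\<alpha> / N j) * (if l = j then 1 else 0)" for l j
      by (simp add: d_eq dh)
    define oA where "oA = onorm (\<lambda>v. A *v v)"
    define oP where "oP = onorm (\<lambda>v. pinv A *v v)"
    have kap_eq: "kappa A = oA * oP" by (simp add: kappa_def oA_def oP_def)
    have oA0: "oA \<ge> 0" unfolding oA_def by (rule onorm_pos_le) simp
    have oA: "norm (a (idx j)) \<le> oA" for j
      using onorm[of "\<lambda>v. A *v v" "axis j 1"] by (simp add: oA_def Aaxis)
    have oP: "N j \<le> oP" for j
    proof -
      define w where "w = transpose (pinv A) *v axis j 1"
      have Nw: "N j = norm w" by (simp add: N_def w_def dhat_def)
      have "w \<bullet> w = (axis j 1 v* pinv A) \<bullet> w" by (simp add: w_def)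
      also have "\<dots> = axis j 1 \<bullet> (pinv A *v w)" by (rule dot_lmul_matrix)
      also have "\<dots> \<le> norm (axis j (1::real)) * norm (pinv A *v w)" by (rule norm_cauchy_schwarz)
      also have "\<dots> \<le> oP * norm w"
        using onorm[of "\<lambda>v. pinv A *v v" w] by (simp add: oP_def)
      finally have "norm w * norm w \<le> oP * norm w" by (simp add: power2_norm_eq_inner[symmetric] power2_eq_square)
      then show ?thesis using Npos[of j] Nw by simp
    qed
    have oP0: "oP \<ge> 0" unfolding oP_def by (rule onorm_pos_le) simp
    have kap: "norm (a (idx j)) * N j \<le> kappa A" for j
      unfolding kap_eq using oA oP oA0 Npos[of j] by (intro mult_mono) auto
    have one_le: "1 \<le> norm (a (idx j)) * N j" for j
      using Cauchy_Schwarz_ineq2[of "a (idx j)" "dhat A j"] dh[of j j] by (simp add: N_def)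
    define t where "t j = (b (idx j) - a (idx j) \<bullet> x) * N j / \<alpha>" for j
    have t0: "t j \<ge> 0" for j using xin[OF idxm[of j]] Npos[of j] alpha_pos by (simp add: t_def)
    have tN: "t j * (\<alpha> / N j) = b (idx j) - a (idx j) \<bullet> x" for j
      using Npos[of j] alpha_pos by (simp add: t_def field_simps)
    have s_in: "x - min 1 (t j) *\<^sub>R d j \<in> \<Omega>" for j
    proof -
      let ?s = "min 1 (t j)"
      have "x + (- (?s *\<^sub>R d j)) \<in> \<Omega>"
      proof (rule in_poly')
        show "norm (- (?s *\<^sub>R d j)) \<le> \<alpha>" using t0[of j] alpha_pos by (simp add: nd)
        fix i assume "i \<in> I"
        then obtain l where l: "i = idx l" using Iidx by blast
        show "a i \<bullet> - (?s *\<^sub>R d j) \<le> b i - a i \<bullet> x"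
        proof (cases "l = j")
          case True
          have "?s * (\<alpha> / N j) \<le> t j * (\<alpha> / N j)"
            using Npos[of j] alpha_pos by (intro mult_right_mono) auto
          then show ?thesis using True l ad tN by simp
        next
          case False then show ?thesis using l ad xin[OF idxm[of l]] by simp
        qed
      qed
      then show ?thesis by simp
    qed
    have sj: "step_j \<Omega> x \<alpha> A j = min 1 (t j)" for j
      unfolding step_j_def d_def[symmetric]
    proof (rule Greatest_equality)
      show "min 1 (t j) \<in> {0..1} \<and> x - min 1 (t j) *\<^sub>R d j \<in> \<Omega>" using s_in t0[of j] by simp
      fix y assume y: "y \<in> {0..1} \<and> x - y *\<^sub>R d j \<in> \<Omega>"
      then have "a (idx j) \<bullet> (x - y *\<^sub>R d j) \<le> b (idx j)" using idxm[of j] by (auto simp: \<Omega>_def polyhedron_def)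
      then have "y * (\<alpha> / N j) \<le> t j * (\<alpha> / N j)" using ad[of j j] tN[of j] by (simp add: inner_diff_right)
      then have "y \<le> t j" by (rule mult_right_le_imp_le) (use Npos[of j] alpha_pos in simp)
      then show "y \<le> min 1 (t j)" using y by simp
    qed
    have uperp: "a (idx l) \<bullet> u k = 0" if k: "k \<in> {CARD('q)+1..?n}" for k l
    proof -
      have "a (idx l) \<in> span (u ` {1..CARD('q)})" unfolding spnA by (metis Aaxis rangeI)
      then have "orthogonal (u k) (a (idx l))"
      proof (rule orthogonal_to_span)
        fix y assume "y \<in> u ` {1..CARD('q)}"
        then obtain l' where "l' \<in> {1..CARD('q)}" "y = u l'" by auto
        then show "orthogonal (u k) y" using uo[of k l'] k qn by (auto simp: orthogonal_def)
      qed
      then show ?thesis by (simp add: orthogonal_def inner_commute)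
    qed
    let ?D = "Dset \<Omega> x \<alpha> A u"
    have Deq: "?D = range d \<union> (\<lambda>j. - (min 1 (t j) *\<^sub>R d j)) ` UNIV
       \<union> (\<lambda>k. \<alpha> *\<^sub>R u k) ` {CARD('q)+1..?n} \<union> (\<lambda>k. - (\<alpha> *\<^sub>R u k)) ` {CARD('q)+1..?n}"
      unfolding Dset_def d_def[symmetric] sj ..
    have finD: "finite ?D" unfolding Deq by simp
    have "pos_spanning (real CARD('q) * kappa A + sqrt (real ?n - real CARD('q))) ?D \<Omega> x \<alpha>"
      unfolding pos_spanning_rep
    proof (intro conjI allI impI ballI finD)
      fix e assume "e \<in> ?D"
      then consider (a) j where "e = d j" | (b) j where "e = - (min 1 (t j) *\<^sub>R d j)"
        | (c) k where "k \<in> {CARD('q)+1..?n}" "e = \<alpha> *\<^sub>R u k \<or> e = - (\<alpha> *\<^sub>R u k)"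
        unfolding Deq by blast
      then show "x + e \<in> \<Omega>"
      proof cases
        case (a j)
        show ?thesis unfolding a
        proof (rule in_poly')
          show "norm (d j) \<le> \<alpha>" by (simp add: nd)
          fix i assume "i \<in> I"
          then obtain l where l: "i = idx l" using Iidx by blast
          show "a i \<bullet> d j \<le> b i - a i \<bullet> x"
            using l ad[of l j] xin[OF idxm[of l]] divide_pos_pos[OF alpha_pos Npos[of j]]
            by (cases "l = j") auto
        qed
      next
        case (b j) then show ?thesis using s_in[of j] by simp
      next
        case (c k)
        have nk: "norm e \<le> \<alpha>" using c norm_u[of k] alpha_pos qn by auto
        show ?thesis
        proof (rule in_poly'[OF nk])
          fix i assume "i \<in> I"
          then obtain l where l: "i = idx l" using Iidx by blast
          show "a i \<bullet> e \<le> b i - a i \<bullet> x"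
            using c l uperp[of k l] xin[OF idxm[of l]] by auto
        qed
      qed
    next
      fix v assume v: "x + v \<in> \<Omega> \<and> norm v \<le> \<alpha>"
      let ?q = "CARD('q)"
      define W where "W = (\<Sum>k\<in>{1..?q}. (v \<bullet> u k) *\<^sub>R u k)"
      define R where "R = (\<Sum>k\<in>{?q+1..?n}. (v \<bullet> u k) *\<^sub>R u k)"
      have vWR: "v = W + R"
      proof -
        have "v = (\<Sum>k\<in>{1..?q + (?n - ?q)}. (v \<bullet> u k) *\<^sub>R u k)" using onb[OF u_orth, of v] qn by simp
        also have "\<dots> = W + R" unfolding W_def R_def by (subst sum.ub_add_nat) (use qn in auto)
        finally show ?thesis .
      qed
      have "W \<in> span (u ` {1..?q})" unfolding W_def
        by (intro span_sum span_scale span_base) auto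
      then obtain c where Wc: "W = A *v c" unfolding spnA by auto
      have aR: "a (idx l) \<bullet> R = 0" for l
        unfolding R_def by (simp add: inner_sum_right uperp)
      have aW: "a (idx l) \<bullet> W = a (idx l) \<bullet> v" for l
        using aR[of l] vWR by (simp add: inner_add_right)
      define \<gamma> where "\<gamma> j = - (a (idx j) \<bullet> v) * N j / \<alpha>" for j
      have Wg: "W = (\<Sum>j\<in>UNIV. \<gamma> j *\<^sub>R d j)"
      proof -
        have "W = - (\<Sum>j\<in>UNIV. ((transpose A *v W) $ j) *\<^sub>R dhat A j)"
          using expand_col[OF pf2, of c] Wc by simp
        also have "\<dots> = (\<Sum>j\<in>UNIV. \<gamma> j *\<^sub>R d j)"
          unfolding sum_negf[symmetric]
        proof (rule sum.cong)
          fix j :: 'q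
          have "\<gamma> j * (\<alpha> / N j) = - (a (idx j) \<bullet> v)"
            using Npos[of j] alpha_pos by (simp add: \<gamma>_def field_simps)
          then show "- (((transpose A *v W) $ j) *\<^sub>R dhat A j) = \<gamma> j *\<^sub>R d j"
            unfolding tcomp aW by (simp add: d_eq)
        qed simp
        finally show ?thesis .
      qed
      have av: "a (idx j) \<bullet> v \<le> b (idx j) - a (idx j) \<bullet> x" for j
      proof -
        have "a (idx j) \<bullet> (x + v) \<le> b (idx j)" using v idxm[of j] by (simp add: \<Omega>_def polyhedron_def)
        then show ?thesis by (simp add: inner_add_right)
      qed
      have avn: "\<bar>a (idx j) \<bullet> v\<bar> * N j / \<alpha> \<le> norm (a (idx j)) * N j" for j
      proof -
        have "\<bar>a (idx j) \<bullet> v\<bar> \<le> norm (a (idx j)) * \<alpha>"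
          using Cauchy_Schwarz_ineq2[of "a (idx j)" v] v mult_left_mono[of "norm v" \<alpha> "norm (a (idx j))"]
          by auto
        then have "\<bar>a (idx j) \<bullet> v\<bar> * N j \<le> norm (a (idx j)) * \<alpha> * N j"
          using Npos[of j] by (intro mult_right_mono) auto
        then show ?thesis using alpha_pos by (simp add: pos_divide_le_eq mult.commute mult.left_commute)
      qed
      have gabs: "\<bar>\<gamma> j\<bar> \<le> norm (a (idx j)) * N j" for j
      proof -
        have "\<bar>\<gamma> j\<bar> = \<bar>a (idx j) \<bullet> v\<bar> * N j / \<alpha>"
          using Npos[of j] alpha_pos by (simp add: \<gamma>_def abs_mult abs_divide)
        then show ?thesis using avn[of j] by simp
      qed
      have repj: "rep ?D (\<gamma> j *\<^sub>R d j) (kappa A)" for j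
      proof (cases "\<gamma> j \<ge> 0")
        case True
        have "d j \<in> ?D" unfolding Deq by auto
        then have "rep ?D (\<gamma> j *\<^sub>R d j) (\<gamma> j)" using True by (intro rep_single finD)
        moreover have "\<gamma> j \<le> kappa A"
          using gabs[of j] kap[of j] by linarith
        ultimately show ?thesis by (rule rep_mono)
      next
        case False
        then have "0 < a (idx j) \<bullet> v * N j / \<alpha>" by (simp add: \<gamma>_def)
        then have avp: "a (idx j) \<bullet> v > 0" using Npos[of j] alpha_pos
          by (simp add: zero_less_divide_iff zero_less_mult_iff)
        have tp: "t j > 0" using av[of j] avp Npos[of j] alpha_pos by (simp add: t_def)
        define s where "s = min 1 (t j)"
        have sp: "s > 0" using tp by (simp add: s_def)
        have e: "\<gamma> j *\<^sub>R d j = (- \<gamma> j / s) *\<^sub>R (- (s *\<^sub>R d j))" using sp by simp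
        have mem: "- (s *\<^sub>R d j) \<in> ?D" unfolding Deq s_def by auto
        have rr: "rep ?D (\<gamma> j *\<^sub>R d j) (- \<gamma> j / s)"
          unfolding e by (rule rep_single[OF finD mem]) (use False sp in \<open>auto simp: divide_nonpos_pos\<close>)
        have "- \<gamma> j / s \<le> kappa A"
        proof (cases "t j \<ge> 1")
          case True
          then have "s = 1" by (simp add: s_def)
          then show ?thesis using gabs[of j] kap[of j] by simp
        next
          case False
          then have "s = t j" by (simp add: s_def)
          then have "- \<gamma> j / s = (a (idx j) \<bullet> v) / (b (idx j) - a (idx j) \<bullet> x)"
          proof -
            have B: "b (idx j) - a (idx j) \<bullet> x > 0" using av[of j] avp by simp
            have g: "- \<gamma> j = (a (idx j) \<bullet> v) * N j / \<alpha>" by (simp add: \<gamma>_def)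
            have ss: "s = (b (idx j) - a (idx j) \<bullet> x) * N j / \<alpha>" using \<open>s = t j\<close> by (simp add: t_def)
            show ?thesis unfolding g ss using B Npos[of j] alpha_pos by (simp add: field_simps)
          qed
          also have "\<dots> \<le> 1" using av[of j] avp by (simp add: divide_le_eq_1)
          also have "\<dots> \<le> kappa A" using one_le[of j] kap[of j] by linarith
          finally show ?thesis .
        qed
        then show ?thesis using rr rep_mono by blast
      qed
      have "rep ?D (\<Sum>j\<in>UNIV. \<gamma> j *\<^sub>R d j) (\<Sum>j\<in>(UNIV::'q set). kappa A)"
        by (rule rep_sum) (auto intro: repj)
      then have rW: "rep ?D W (real ?q * kappa A)" using Wg by simp
      have rR0: "rep ?D R (\<Sum>k\<in>{?q+1..?n}. \<bar>v \<bullet> u k\<bar> / \<alpha>)"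
        unfolding R_def by (rule rep_u[OF finD alpha_pos]) (auto simp: Deq)
      have "(\<Sum>k\<in>{?q+1..?n}. \<bar>v \<bullet> u k\<bar>) \<le> sqrt (real (card {?q+1..?n})) * norm v"
        by (rule abs_sum_bound[OF u_orth]) auto
      also have "\<dots> \<le> sqrt (real ?n - real ?q) * \<alpha>" using v qn by (simp add: mult_left_mono of_nat_diff)
      finally have "(\<Sum>k\<in>{?q+1..?n}. \<bar>v \<bullet> u k\<bar> / \<alpha>) \<le> sqrt (real ?n - real ?q)"
        using alpha_pos by (simp add: sum_divide_distrib[symmetric] pos_divide_le_eq)
      then have rR: "rep ?D R (sqrt (real ?n - real ?q))" using rR0 rep_mono by blast
      show "rep ?D v (real ?q * kappa A + sqrt (real ?n - real ?q))"
        using rep_add[OF rW rR] vWR by simp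
    qed
    then show "pos_spanning (real CARD('q) * kappa (col_matrix a idx) + sqrt (real CARD('n) - real CARD('q)))
            (Dset \<Omega> x \<alpha> (col_matrix a idx) u) \<Omega> x \<alpha>" by (simp add: A_def)
  qed
qed

end
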